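(* Let $G$ be a graph with $G = G_1\square G_2$ for graphs $G_1,G_2$. Then $G$ is regular $K_3$-regular if and only if both $G_1$ and $G_2$ are regular $K_3$-regular.
   Context: All graphs are finite, simple and undirected. The $K_3$-degree of a vertex $v$ is the number of triangles containing $v$. A graph is regular $K_3$-regular if all its vertices have the same degree and all its vertices have the same $K_3$-degree. The Cartesian product $G_1\square G_2$ has vertex set $V(G_1)\times V(G_2)$, with $(u,v)$ and $(u',v')$ adjacent iff either $u=u'$ and $vv'\in E(G_2)$, or $v=v'$ and $uu'\in E(G_1)$. *)

theory Defs
  imports Main
begin

definition simple_graph :: "'a set \<Rightarrow> ('a \<times> 'a) set \<Rightarrow> bool" where
  "simple_graph V E \<longleftrightarrow> finite V \<and> V \<noteq> {} \<and> E \<subseteq> V \<times> V \<and> sym E \<and> irrefl E"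

definition degree :: "'a set \<Rightarrow> ('a \<times> 'a) set \<Rightarrow> 'a \<Rightarrow> nat" where
  "degree V E v = card {u \<in> V. (v, u) \<in> E}"

text \<open>Number of triangles containing v: a triangle containing v is
{v,u,w} with u,w adjacent neighbours of v; counted via the pair {u,w}.\<close>

definition k3_degree :: "'a set \<Rightarrow> ('a \<times> 'a) set \<Rightarrow> 'a \<Rightarrow> nat" where
  "k3_degree V E v = card {{u, w} | u w. u \<in> V \<and> w \<in> V \<and> (v, u) \<in> E \<and> (v, w) \<in> E \<and> (u, w) \<in> E}"

definition regular_K3_regular :: "'a set \<Rightarrow> ('a \<times> 'a) set \<Rightarrow> bool" where
  "regular_K3_regular V E \<longleftrightarrow>
     (\<exists>d t. \<forall>v \<in> V. degree V E v = d \<and> k3_degree V E v = t)"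

definition cart_prod_vertices :: "'a set \<Rightarrow> 'b set \<Rightarrow> ('a \<times> 'b) set" where
  "cart_prod_vertices V1 V2 = V1 \<times> V2"

definition cart_prod_edges ::
  "'a set \<Rightarrow> ('a \<times> 'a) set \<Rightarrow> 'b set \<Rightarrow> ('b \<times> 'b) set \<Rightarrow> (('a \<times> 'b) \<times> ('a \<times> 'b)) set" where
  "cart_prod_edges V1 E1 V2 E2 =
     {((u, v), (u', v')). u \<in> V1 \<and> u' \<in> V1 \<and> v \<in> V2 \<and> v' \<in> V2 \<and>
        ((u = u' \<and> (v, v') \<in> E2) \<or> (v = v' \<and> (u, u') \<in> E1))}"

end

theory Submission
  imports Defs
begin

lemma deg_prod:
  assumes g1: "simple_graph V1 E1" and g2: "simple_graph V2 E2" and u: "u \<in> V1" and v: "v \<in> V2"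
  shows "degree (cart_prod_vertices V1 V2) (cart_prod_edges V1 E1 V2 E2) (u, v)
         = degree V1 E1 u + degree V2 E2 v"
proof -
  from g1 g2 have f1: "finite V1" and f2: "finite V2" and ir1: "irrefl E1" and ir2: "irrefl E2"
    and s1: "E1 \<subseteq> V1 \<times> V1" and s2: "E2 \<subseteq> V2 \<times> V2"
    by (auto simp: simple_graph_def)
  let ?A = "(\<lambda>a. (a, v)) ` {a \<in> V1. (u, a) \<in> E1}"
  let ?B = "(\<lambda>b. (u, b)) ` {b \<in> V2. (v, b) \<in> E2}"
  have eq: "{p \<in> cart_prod_vertices V1 V2. ((u, v), p) \<in> cart_prod_edges V1 E1 V2 E2} = ?A \<union> ?B"
    using u v by (auto simp: cart_prod_vertices_def cart_prod_edges_def)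
  have disj: "?A \<inter> ?B = {}" using ir1 by (auto simp: irrefl_def)
  have "card (?A \<union> ?B) = card ?A + card ?B"
    by (rule card_Un_disjoint) (use f1 f2 disj in auto)
  moreover have "card ?A = degree V1 E1 u"
    unfolding degree_def by (rule card_image) (auto simp: inj_on_def)
  moreover have "card ?B = degree V2 E2 v"
    unfolding degree_def by (rule card_image) (auto simp: inj_on_def)
  ultimately show ?thesis unfolding degree_def[of "cart_prod_vertices V1 V2"] eq by simp
qed

lemma k3_prod:
  assumes g1: "simple_graph V1 E1" and g2: "simple_graph V2 E2" and u: "u \<in> V1" and v: "v \<in> V2"
  shows "k3_degree (cart_prod_vertices V1 V2) (cart_prod_edges V1 E1 V2 E2) (u, v)
         = k3_degree V1 E1 u + k3_degree V2 E2 v"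
proof -
  from g1 g2 have f1: "finite V1" and f2: "finite V2" and ir1: "irrefl E1" and ir2: "irrefl E2"
    and s1: "E1 \<subseteq> V1 \<times> V1" and s2: "E2 \<subseteq> V2 \<times> V2"
    by (auto simp: simple_graph_def)
  define T1 where "T1 = {{a, b} | a b. a \<in> V1 \<and> b \<in> V1 \<and> (u, a) \<in> E1 \<and> (u, b) \<in> E1 \<and> (a, b) \<in> E1}"
  define T2 where "T2 = {{a, b} | a b. a \<in> V2 \<and> b \<in> V2 \<and> (v, a) \<in> E2 \<and> (v, b) \<in> E2 \<and> (a, b) \<in> E2}"
  let ?A = "(\<lambda>S. (\<lambda>a. (a, v)) ` S) ` T1"
  let ?B = "(\<lambda>S. (\<lambda>b. (u, b)) ` S) ` T2"
  have fT1: "finite T1"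
  proof -
    have "T1 \<subseteq> Pow V1" unfolding T1_def by auto
    then show ?thesis using f1 by (meson finite_Pow_iff finite_subset)
  qed
  have fT2: "finite T2"
  proof -
    have "T2 \<subseteq> Pow V2" unfolding T2_def by auto
    then show ?thesis using f2 by (meson finite_Pow_iff finite_subset)
  qed
  have eq: "{{p, q} | p q. p \<in> cart_prod_vertices V1 V2 \<and> q \<in> cart_prod_vertices V1 V2
      \<and> ((u, v), p) \<in> cart_prod_edges V1 E1 V2 E2 \<and> ((u, v), q) \<in> cart_prod_edges V1 E1 V2 E2
      \<and> (p, q) \<in> cart_prod_edges V1 E1 V2 E2} = ?A \<union> ?B" (is "?L = _")
  proof
    show "?L \<subseteq> ?A \<union> ?B"
    proof
      fix X assume "X \<in> ?L"
      then obtain p q where X: "X = {p, q}" and p: "p \<in> cart_prod_vertices V1 V2"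
        and q: "q \<in> cart_prod_vertices V1 V2"
        and up: "((u, v), p) \<in> cart_prod_edges V1 E1 V2 E2"
        and uq: "((u, v), q) \<in> cart_prod_edges V1 E1 V2 E2"
        and pq: "(p, q) \<in> cart_prod_edges V1 E1 V2 E2" by blast
      obtain a b where pab: "p = (a, b)" by force
      obtain c d where qcd: "q = (c, d)" by force
      have irr1: "\<And>x. (x, x) \<notin> E1" and irr2: "\<And>x. (x, x) \<notin> E2"
        using ir1 ir2 by (auto simp: irrefl_def)
      consider "b = v" "(u, a) \<in> E1" "d = v" "(u, c) \<in> E1" "(a, c) \<in> E1"
        | "a = u" "(v, b) \<in> E2" "c = u" "(v, d) \<in> E2" "(b, d) \<in> E2"
        using up uq pq irr1 irr2 unfolding pab qcd cart_prod_edges_def by auto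
      then show "X \<in> ?A \<union> ?B"
      proof cases
        case 1
        have "{a, c} \<in> T1" unfolding T1_def using 1 s1 by blast
        moreover have "X = (\<lambda>a. (a, v)) ` {a, c}" using 1 X pab qcd by auto
        ultimately show ?thesis by blast
      next
        case 2
        have "{b, d} \<in> T2" unfolding T2_def using 2 s2 by blast
        moreover have "X = (\<lambda>b. (u, b)) ` {b, d}" using 2 X pab qcd by auto
        ultimately show ?thesis by blast
      qed
    qed
  next
    show "?A \<union> ?B \<subseteq> ?L"
    proof
      fix X assume "X \<in> ?A \<union> ?B"
      then show "X \<in> ?L"
      proof
        assume "X \<in> ?A"
        then obtain a b where "a \<in> V1" "b \<in> V1" "(u, a) \<in> E1" "(u, b) \<in> E1" "(a, b) \<in> E1"
          and X: "X = {(a, v), (b, v)}" unfolding T1_def by auto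
        then show ?thesis using u v
          by (auto simp: cart_prod_vertices_def cart_prod_edges_def intro!: exI[of _ "(a, v)"] exI[of _ "(b, v)"])
      next
        assume "X \<in> ?B"
        then obtain a b where "a \<in> V2" "b \<in> V2" "(v, a) \<in> E2" "(v, b) \<in> E2" "(a, b) \<in> E2"
          and X: "X = {(u, a), (u, b)}" unfolding T2_def by auto
        then show ?thesis using u v
          by (auto simp: cart_prod_vertices_def cart_prod_edges_def intro!: exI[of _ "(u, a)"] exI[of _ "(u, b)"])
      qed
    qed
  qed
  have disj: "?A \<inter> ?B = {}"
  proof (rule ccontr)
    assume "?A \<inter> ?B \<noteq> {}"
    then obtain S S' where S: "S \<in> T1" and S': "S' \<in> T2"
      and e: "(\<lambda>a. (a, v)) ` S = (\<lambda>b. (u, b)) ` S'" by auto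
    from S obtain a b where "S = {a, b}" "(u, a) \<in> E1" unfolding T1_def by auto
    then have "(a, v) \<in> (\<lambda>b. (u, b)) ` S'" using e by auto
    then have "a = u" by auto
    with \<open>(u, a) \<in> E1\<close> ir1 show False by (auto simp: irrefl_def)
  qed
  have "card (?A \<union> ?B) = card ?A + card ?B"
    by (rule card_Un_disjoint) (use fT1 fT2 disj in auto)
  moreover have "card ?A = card T1"
    by (rule card_image) (auto simp: inj_on_def inj_image_eq_iff)
  moreover have "card ?B = card T2"
    by (rule card_image) (auto simp: inj_on_def inj_image_eq_iff)
  ultimately show ?thesis unfolding k3_degree_def T1_def T2_def eq by simp
qed

theorem theorem4p2:
  fixes V1 :: "'a set" and E1 :: "('a \<times> 'a) set"
    and V2 :: "'b set" and E2 :: "('b \<times> 'b) set"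
  assumes "simple_graph V1 E1" and "simple_graph V2 E2"
  shows "regular_K3_regular (cart_prod_vertices V1 V2) (cart_prod_edges V1 E1 V2 E2)
         \<longleftrightarrow> regular_K3_regular V1 E1 \<and> regular_K3_regular V2 E2"
proof
  assume "regular_K3_regular (cart_prod_vertices V1 V2) (cart_prod_edges V1 E1 V2 E2)"
  then obtain d t where h: "\<And>p. p \<in> V1 \<times> V2 \<Longrightarrow>
      degree (cart_prod_vertices V1 V2) (cart_prod_edges V1 E1 V2 E2) p = d \<and>
      k3_degree (cart_prod_vertices V1 V2) (cart_prod_edges V1 E1 V2 E2) p = t"
    unfolding regular_K3_regular_def cart_prod_vertices_def[of V1 V2, symmetric] by blast
  obtain u0 where u0: "u0 \<in> V1" using assms(1) by (auto simp: simple_graph_def)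
  obtain v0 where v0: "v0 \<in> V2" using assms(2) by (auto simp: simple_graph_def)
  have h2: "\<And>u v. u \<in> V1 \<Longrightarrow> v \<in> V2 \<Longrightarrow> degree V1 E1 u + degree V2 E2 v = d \<and>
      k3_degree V1 E1 u + k3_degree V2 E2 v = t"
    using h deg_prod[OF assms] k3_prod[OF assms] by fastforce
  have "regular_K3_regular V1 E1"
    unfolding regular_K3_regular_def
    by (rule exI[of _ "d - degree V2 E2 v0"], rule exI[of _ "t - k3_degree V2 E2 v0"])
      (use h2 v0 in fastforce)
  moreover have "regular_K3_regular V2 E2"
    unfolding regular_K3_regular_def
    by (rule exI[of _ "d - degree V1 E1 u0"], rule exI[of _ "t - k3_degree V1 E1 u0"])
      (use h2 u0 in fastforce)
  ultimately show "regular_K3_regular V1 E1 \<and> regular_K3_regular V2 E2" ..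
next
  assume "regular_K3_regular V1 E1 \<and> regular_K3_regular V2 E2"
  then obtain d1 t1 d2 t2 where a: "\<forall>v\<in>V1. degree V1 E1 v = d1 \<and> k3_degree V1 E1 v = t1"
    and b: "\<forall>v\<in>V2. degree V2 E2 v = d2 \<and> k3_degree V2 E2 v = t2"
    unfolding regular_K3_regular_def by blast
  show "regular_K3_regular (cart_prod_vertices V1 V2) (cart_prod_edges V1 E1 V2 E2)"
    unfolding regular_K3_regular_def
    by (rule exI[of _ "d1 + d2"], rule exI[of _ "t1 + t2"])
      (metis (no_types, lifting) SigmaE cart_prod_vertices_def deg_prod[OF assms] k3_prod[OF assms] a b)
qed

end
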